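(* Let $\mathcal{G}=(V,E_1,\dots,E_T)$ be a public transport graph on $n=|V|$ vertices composed of the routes $\mathcal{W}_1,\dots,\mathcal{W}_m$, such that the underlying graph $U(\mathcal{G})$ is connected. Then there exists an exploration of $\mathcal{G}$ of length at most $(2n-3)\max_{i\in[1,m]}L_i$, where $L_i=|\mathcal{W}_i|$.
   Context: A temporal graph $\mathcal{G}=(V,E_1,\dots,E_T)$ consists of a finite vertex set $V$ and an ordered sequence of edge sets $E_1,\dots,E_T$ on $V$ (timesteps); $T$ is the lifetime; an edge $e$ is active at timestep $t$ if $e\in E_t$; the underlying graph is $U(\mathcal{G})=(V,\bigcup_t E_t)$. A temporal walk is a sequence $((v_{i_1},v_{i_2}),t_1),\dots,((v_{i_{m-1}},v_{i_m}),t_{m-1})$ such that the edges form a walk (end point of each edge is the start point of the next), with $t_1<\dots<t_{m-1}$; its length is $t_{m-1}$ (the timestep of its last step). In a temporal graph, a temporal walk additionally requires each edge $(v_{i_j},v_{i_{j+1}})$ to be active at timestep $t_j$; it explores $\mathcal{G}$ if every vertex of $V$ belongs to some edge of the walk. A public transport graph with lifetime $T$ is defined by a set of temporal walks (routes) $\mathcal{W}_1,\dots,\mathcal{W}_m$ over a common vertex set $V$: writing the $j$-th step of $\mathcal{W}_i$ as $(\mathcal{W}_i[j],\mathcal{T}_i[j])$ and $L_i=|\mathcal{W}_i|$ (the last timestep of $\mathcal{W}_i$), for each $t\in[1,T]$ an edge $e$ belongs to $E_t$ iff there exist $i\in[1,m]$ and $j$ with $e=\mathcal{W}_i[j]$ and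 $\mathcal{T}_i[j]=t \bmod L_i$. (Routes are repeated periodically.) *)

theory Defs
  imports Main
begin

type_synonym 'a step = "('a \<times> 'a) \<times> nat"

definition step_edge :: "'a step \<Rightarrow> 'a set" where
  "step_edge s = {fst (fst s), snd (fst s)}"

definition temporal_walk :: "'a step list \<Rightarrow> bool" where
  "temporal_walk ws \<longleftrightarrow> ws \<noteq> [] \<and>
     (\<forall>j. Suc j < length ws \<longrightarrow> snd (fst (ws ! j)) = fst (fst (ws ! Suc j))) \<and>
     sorted_wrt (<) (map snd ws) \<and> (\<forall>s \<in> set ws. 1 \<le> snd s)"

text \<open>Length of a temporal walk = timestep of its last step (L_i = |W_i|).\<close>
definition walk_len :: "'a step list \<Rightarrow> nat" where
  "walk_len ws = snd (last ws)"

text \<open>Edge set E_t of the public transport graph defined by the routes Ws: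
  e \<in> E_t iff some step of some route W_i carries e at a timestep congruent to t mod L_i
  (routes repeated periodically).\<close>
definition pt_edges :: "'a step list list \<Rightarrow> nat \<Rightarrow> 'a set set" where
  "pt_edges Ws t = {e. \<exists>W \<in> set Ws. \<exists>j < length W.
      e = step_edge (W ! j) \<and> snd (W ! j) mod walk_len W = t mod walk_len W}"

definition underlying_edges :: "'a step list list \<Rightarrow> 'a set set" where
  "underlying_edges Ws = (\<Union>t \<in> {1..}. pt_edges Ws t)"

definition connected_on :: "'a set \<Rightarrow> 'a set set \<Rightarrow> bool" where
  "connected_on V E \<longleftrightarrow>
     (\<forall>u \<in> V. \<forall>v \<in> V. (u, v) \<in> {(x, y). {x, y} \<in> E}\<^sup>*)"

definition pt_temporal_walk :: "'a step list list \<Rightarrow> 'a step list \<Rightarrow> bool" where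
  "pt_temporal_walk Ws ws \<longleftrightarrow> temporal_walk ws \<and>
     (\<forall>s \<in> set ws. step_edge s \<in> pt_edges Ws (snd s))"

definition explores :: "'a set \<Rightarrow> 'a step list list \<Rightarrow> 'a step list \<Rightarrow> bool" where
  "explores V Ws ws \<longleftrightarrow> pt_temporal_walk Ws ws \<and> V \<subseteq> (\<Union>s \<in> set ws. step_edge s)"

definition pt_graph :: "'a set \<Rightarrow> 'a step list list \<Rightarrow> bool" where
  "pt_graph V Ws \<longleftrightarrow> finite V \<and> Ws \<noteq> [] \<and>
     (\<forall>W \<in> set Ws. temporal_walk W \<and> (\<forall>s \<in> set W. step_edge s \<subseteq> V))"

end

theory Submission
  imports Defs
begin

fun adjw :: "'a set set \<Rightarrow> 'a list \<Rightarrow> bool" where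
  "adjw E (x # y # zs) = ({x, y} \<in> E \<and> adjw E (y # zs))"
| "adjw E _ = True"

lemma adjw_append: "adjw E (xs @ x # ys) = (adjw E (xs @ [x]) \<and> adjw E (x # ys))"
proof (induction xs)
  case Nil
  then show ?case by simp
next
  case (Cons a xs)
  then show ?case by (cases xs) auto
qed

lemma adjw_nth: "adjw E p \<Longrightarrow> Suc i < length p \<Longrightarrow> {p ! i, p ! Suc i} \<in> E"
proof (induction E p arbitrary: i rule: adjw.induct)
  case (1 E x y zs)
  then show ?case by (cases i) auto
qed auto

lemma exit_edge:
  assumes "(a, b) \<in> R\<^sup>*" "a \<in> S" "b \<notin> S"
  shows "\<exists>x y. (x, y) \<in> R \<and> x \<in> S \<and> y \<notin> S"
  using assms
proof (induction rule: rtrancl_induct)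
  case base
  then show ?case by simp
next
  case (step b c)
  then show ?case by (cases "b \<in> S") auto
qed

lemma underlying_subset:
  assumes "pt_graph V Ws" "e \<in> underlying_edges Ws"
  shows "e \<subseteq> V"
  using assms unfolding pt_graph_def underlying_edges_def pt_edges_def
  by (force simp: nth_mem)

lemma closed_walk:
  assumes "pt_graph V Ws" "connected_on V (underlying_edges Ws)" "v0 \<in> V"
    "1 \<le> k" "k \<le> card V"
  shows "\<exists>p. p \<noteq> [] \<and> hd p = v0 \<and> last p = v0 \<and> adjw (underlying_edges Ws) p
     \<and> set p \<subseteq> V \<and> length p \<le> 2 * card (set p) - 1 \<and> card (set p) = k"
  using assms(4,5)
proof (induction k rule: dec_induct)
  case base
  show ?case by (rule exI[of _ "[v0]"]) (use assms in auto)
next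
  case (step k)
  then obtain p where p: "p \<noteq> []" "hd p = v0" "last p = v0" "adjw (underlying_edges Ws) p"
     "set p \<subseteq> V" "length p \<le> 2 * card (set p) - 1" "card (set p) = k" by auto
  have fin: "finite V" using assms(1) unfolding pt_graph_def by auto
  have "set p \<noteq> V" using step p by auto
  then obtain w where w: "w \<in> V" "w \<notin> set p" using p by auto
  have "(v0, w) \<in> {(x, y). {x, y} \<in> underlying_edges Ws}\<^sup>*"
    using assms(2,3) w unfolding connected_on_def by auto
  moreover have "v0 \<in> set p" using p by (cases p) auto
  ultimately have "\<exists>x y. (x, y) \<in> {(x, y). {x, y} \<in> underlying_edges Ws} \<and> x \<in> set p \<and> y \<notin> set p"
    using exit_edge[of v0 w _ "set p"] w by blast
  then obtain x y where xy: "{x, y} \<in> underlying_edges Ws" "x \<in> set p" "y \<notin> set p"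
    by auto
  have yV: "y \<in> V" using underlying_subset[OF assms(1) xy(1)] by auto
  obtain xs ys where pxs: "p = xs @ x # ys" using split_list[OF xy(2)] by auto
  define q where "q = xs @ x # y # x # ys"
  have "adjw (underlying_edges Ws) q"
  proof -
    have a1: "adjw (underlying_edges Ws) (xs @ [x])" "adjw (underlying_edges Ws) (x # ys)"
      using p(4) pxs adjw_append by metis+
    have "{y, x} \<in> underlying_edges Ws" using xy(1) by (simp add: insert_commute)
    then have "adjw (underlying_edges Ws) (x # y # x # ys)" using a1 xy(1) by simp
    then show ?thesis unfolding q_def using a1 adjw_append by metis
  qed
  moreover have "set q = insert y (set p)" unfolding q_def pxs by auto
  moreover have "hd q = v0" using p(2) unfolding q_def pxs by (cases xs) auto
  moreover have "last q = v0" using p(3) unfolding q_def pxs by (cases ys) auto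
  moreover have "length q = length p + 2" unfolding q_def pxs by simp
  moreover have "card (set q) = Suc k" using \<open>set q = insert y (set p)\<close> xy(3) p(7) by simp
  moreover have "card (set p) \<ge> 1" using p(1) by (simp add: Suc_leI card_gt_0_iff)
  ultimately show ?case using p yV
    by (intro exI[of _ q]) (auto simp: q_def)
qed

lemma mod_window:
  fixes a s L :: nat
  assumes "L > 0"
  shows "\<exists>t. a \<le> t \<and> t < a + L \<and> t mod L = s mod L"
proof -
  define r where "r = (s mod L + L - a mod L) mod L"
  have "r < L" using assms unfolding r_def by simp
  moreover have "(a + r) mod L = s mod L"
  proof -
    have "(a + r) mod L = (a mod L + (s mod L + L - a mod L)) mod L"
      unfolding r_def by (metis mod_add_left_eq mod_add_right_eq)
    also have "a mod L + (s mod L + L - a mod L) = s mod L + L"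
      using assms mod_less_divisor[OF assms, of a] by linarith
    finally show ?thesis by simp
  qed
  ultimately show ?thesis by (intro exI[of _ "a + r"]) auto
qed

lemma edge_time:
  assumes "pt_graph V Ws" "e \<in> underlying_edges Ws"
  shows "\<exists>t. k * Max (walk_len ` set Ws) < t \<and> t \<le> Suc k * Max (walk_len ` set Ws)
           \<and> e \<in> pt_edges Ws t"
proof -
  let ?M = "Max (walk_len ` set Ws)"
  obtain t0 where "e \<in> pt_edges Ws t0" using assms(2) unfolding underlying_edges_def by auto
  then obtain W j where W: "W \<in> set Ws" "j < length W" "e = step_edge (W ! j)"
    unfolding pt_edges_def by auto
  have tw: "temporal_walk W" using assms(1) W(1) unfolding pt_graph_def by auto
  then have "W \<noteq> []" "\<forall>s\<in>set W. 1 \<le> snd s" unfolding temporal_walk_def by auto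
  then have Lpos: "walk_len W > 0" unfolding walk_len_def
    by (metis last_in_set less_le_trans zero_less_one)
  have LM: "walk_len W \<le> ?M" using W(1) by (intro Max_ge) auto
  obtain t where t: "k * ?M + 1 \<le> t" "t < k * ?M + 1 + walk_len W"
     "t mod walk_len W = snd (W ! j) mod walk_len W"
    using mod_window[OF Lpos] by blast
  have "e \<in> pt_edges Ws t" unfolding pt_edges_def using W t(3) by (metis (mono_tags, lifting) mem_Collect_eq)
  moreover have "t \<le> Suc k * ?M" using t(2) LM by simp
  ultimately show ?thesis using t(1) by (intro exI[of _ t]) auto
qed

theorem theorem12:
  fixes V :: "'a set" and Ws :: "'a step list list"
  assumes "pt_graph V Ws"
    and "card V \<ge> 2"
    and "connected_on V (underlying_edges Ws)"
  shows "\<exists>ws. explores V Ws ws \<and>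
           walk_len ws \<le> (2 * card V - 3) * Max (walk_len ` set Ws)"
proof -
  let ?M = "Max (walk_len ` set Ws)"
  let ?E = "underlying_edges Ws"
  have fin: "finite V" using assms(1) unfolding pt_graph_def by auto
  have "V \<noteq> {}" using assms(2) by auto
  then obtain v0 where v0: "v0 \<in> V" by auto
  obtain p where p: "p \<noteq> []" "hd p = v0" "last p = v0" "adjw ?E p"
     "set p \<subseteq> V" "length p \<le> 2 * card (set p) - 1" "card (set p) = card V"
    using closed_walk[OF assms(1) assms(3) v0, of "card V"] assms(2) by auto
  have setp: "set p = V" using p(5,7) fin by (simp add: card_subset_eq)
  have len3: "length p \<ge> 3"
  proof (rule ccontr)
    assume "\<not> 3 \<le> length p"
    then have "length p = 1 \<or> length p = 2" proof -
      have "length p > 0" using p(1) by simp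
      then show ?thesis using \<open>\<not> 3 \<le> length p\<close> by linarith
    qed
    then have "set p = {v0}" using p(1,2,3)
      by (auto simp: length_Suc_conv numeral_2_eq_2)
    then show False using setp assms(2) by auto
  qed
  define m where "m = length p - 2"
  have m1: "m \<ge> 1" using len3 unfolding m_def by simp
  have mle: "m \<le> 2 * card V - 3" using p(6) setp unfolding m_def by simp
  define t where "t k = (SOME t. k * ?M < t \<and> t \<le> Suc k * ?M \<and> {p ! k, p ! Suc k} \<in> pt_edges Ws t)" for k
  have tk: "k * ?M < t k \<and> t k \<le> Suc k * ?M \<and> {p ! k, p ! Suc k} \<in> pt_edges Ws (t k)"
    if "k < m" for k
  proof -
    have "{p ! k, p ! Suc k} \<in> ?E" using adjw_nth[OF p(4)] that unfolding m_def by simp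
    from edge_time[OF assms(1) this, of k] show ?thesis unfolding t_def by (rule someI_ex)
  qed
  define ws where "ws = map (\<lambda>k. ((p ! k, p ! Suc k), t k)) [0..<m]"
  have lws: "length ws = m" unfolding ws_def by simp
  have wsk: "ws ! k = ((p ! k, p ! Suc k), t k)" if "k < m" for k
    unfolding ws_def using that by simp
  have mono: "t i < t j" if "i < j" "j < m" for i j
  proof -
    have "t i \<le> Suc i * ?M" using tk that by simp
    also have "\<dots> \<le> j * ?M" using that by (intro mult_right_mono) auto
    also have "\<dots> < t j" using tk that by simp
    finally show ?thesis .
  qed
  have tw: "temporal_walk ws"
    unfolding temporal_walk_def
  proof (intro conjI ballI allI impI)
    show "ws \<noteq> []" using lws m1 by auto
  next
    fix j assume "Suc j < length ws"
    then show "snd (fst (ws ! j)) = fst (fst (ws ! Suc j))" using wsk lws by simp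
  next
    show "sorted_wrt (<) (map snd ws)"
      unfolding sorted_wrt_iff_nth_less using lws wsk mono by auto
  next
    fix s assume "s \<in> set ws"
    then obtain k where "k < m" "s = ws ! k" using lws by (auto simp: in_set_conv_nth)
    then show "1 \<le> snd s" using tk[of k] wsk by simp
  qed
  have ptw: "pt_temporal_walk Ws ws"
    unfolding pt_temporal_walk_def
  proof (intro conjI tw ballI)
    fix s assume "s \<in> set ws"
    then obtain k where "k < m" "s = ws ! k" using lws by (auto simp: in_set_conv_nth)
    then show "step_edge s \<in> pt_edges Ws (snd s)" using tk[of k] wsk by (simp add: step_edge_def)
  qed
  have cover: "V \<subseteq> (\<Union>s \<in> set ws. step_edge s)"
  proof
    fix v assume "v \<in> V"
    then obtain i where i: "i < length p" "v = p ! i" using setp by (auto simp: in_set_conv_nth)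
    have mem: "ws ! k \<in> set ws" if "k < m" for k using that lws by simp
    show "v \<in> (\<Union>s \<in> set ws. step_edge s)"
    proof (cases "i < m")
      case True
      then show ?thesis using mem[OF True] wsk[OF True] i by (force simp: step_edge_def)
    next
      case False
      show ?thesis
      proof (cases "i = m")
        case True
        have "m - 1 < m" "Suc (m - 1) = m" using m1 by auto
        then show ?thesis using mem[of "m - 1"] wsk[of "m - 1"] i True by (force simp: step_edge_def)
      next
        case False
        then have "i = length p - 1" using \<open>\<not> i < m\<close> i unfolding m_def by simp
        then have "v = p ! 0" using i p(1,2,3) by (simp add: last_conv_nth hd_conv_nth)
        then show ?thesis using mem[of 0] wsk[of 0] m1 by (force simp: step_edge_def)
      qed
    qed
  qed
  have "walk_len ws = t (m - 1)"
  proof -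
    have "ws \<noteq> []" using lws m1 by auto
    then show ?thesis unfolding walk_len_def using lws m1 wsk[of "m - 1"] by (simp add: last_conv_nth)
  qed
  also have "\<dots> \<le> m * ?M" using tk[of "m - 1"] m1 by simp
  also have "\<dots> \<le> (2 * card V - 3) * ?M" using mle by (rule mult_right_mono) simp
  finally show ?thesis using ptw cover unfolding explores_def by auto
qed

end
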